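(* For $\mathrm{DSS}(n,k,d,1,\alpha=M/k,\alpha'=\beta,\beta,M)$ in a packet erasure network in which every link from a helper to the new node erases each packet independently with probability $p\in[0,1)$, with each helper transmitting $\beta'=\beta/(1-p)$ packets, the asymptotic optimal (minimum-storage) repair-bandwidth is $$\gamma'_{\mathrm{MSR}}=\frac{M(d+1)}{k(d-k+2)(1-p)}.$$
   Context: $\mathrm{DSS}(n,k,d,h,\alpha,\alpha',\beta,M)$: $n$ complete storage nodes of capacity $\alpha$ with the property that any $k$ reconstruct a file of $M$ packets, plus $h$ repairing storage nodes of capacity $\alpha'$ used only for repair; a failed complete node is replaced using data from $d$ surviving complete nodes and all $h$ repairing nodes. The asymptotic repair-bandwidth is the total number $(d+h)\beta'$ of transmitted packets, in the limit of infinitely many packet transmissions, needed for repair preserving the reconstruction property. *)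

theory Defs
  imports "HOL-Analysis.Analysis"
begin

text \<open>Vertices: the source, the in/out vertices of complete storage nodes (indexed by
  creation time: initial nodes 0..n-1, the newcomer of the j-th repair gets index n+j),
  the in/out vertices of the h repairing nodes, and one data collector.\<close>

datatype vtx = Src | NIn nat | NOut nat | RIn nat | ROut nat | DC

text \<open>A repair event: (index of the failed complete node, set of its d helpers).\<close>
type_synonym event = "nat \<times> nat set"

fun act :: "nat \<Rightarrow> event list \<Rightarrow> nat \<Rightarrow> nat set" where
  "act n es 0 = {..<n}"
| "act n es (Suc j) = (act n es j - {fst (es ! j)}) \<union> {n + j}"

definition valid_history :: "nat \<Rightarrow> nat \<Rightarrow> event list \<Rightarrow> bool" where
  "valid_history n d es \<longleftrightarrow>
     (\<forall>j<length es. fst (es ! j) \<in> act n es j \<and>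
        snd (es ! j) \<subseteq> act n es j - {fst (es ! j)} \<and> card (snd (es ! j)) = d)"

definition vertices :: "nat \<Rightarrow> nat \<Rightarrow> event list \<Rightarrow> vtx set" where
  "vertices n h es = {Src, DC} \<union> NIn ` {..<n + length es} \<union> NOut ` {..<n + length es}
      \<union> RIn ` {..<h} \<union> ROut ` {..<h}"

text \<open>Edge capacities. \<open>c\<close> is the (effective) capacity of every link from a helper
  (complete or repairing node) to a newcomer; \<open>T\<close> is the set of complete nodes the data
  collector connects to.\<close>
fun cap :: "nat \<Rightarrow> nat \<Rightarrow> real \<Rightarrow> real \<Rightarrow> real \<Rightarrow> event list \<Rightarrow> nat set
            \<Rightarrow> vtx \<Rightarrow> vtx \<Rightarrow> ereal" where
  "cap n h \<alpha> \<alpha>' c es T Src (NIn i) = (if i < n then \<infinity> else 0)"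
| "cap n h \<alpha> \<alpha>' c es T (NIn i) (NOut i') =
     (if i = i' \<and> i < n + length es then ereal \<alpha> else 0)"
| "cap n h \<alpha> \<alpha>' c es T (NOut i) (NIn i') =
     (if n \<le> i' \<and> i' < n + length es \<and> i \<in> snd (es ! (i' - n)) then ereal c else 0)"
| "cap n h \<alpha> \<alpha>' c es T Src (RIn r) = (if r < h then \<infinity> else 0)"
| "cap n h \<alpha> \<alpha>' c es T (RIn r) (ROut r') = (if r = r' \<and> r < h then ereal \<alpha>' else 0)"
| "cap n h \<alpha> \<alpha>' c es T (ROut r) (NIn i') =
     (if r < h \<and> n \<le> i' \<and> i' < n + length es then ereal c else 0)"
| "cap n h \<alpha> \<alpha>' c es T (NOut i) DC = (if i \<in> T then \<infinity> else 0)"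
| "cap n h \<alpha> \<alpha>' c es T u v = 0"

definition cut_value :: "nat \<Rightarrow> nat \<Rightarrow> real \<Rightarrow> real \<Rightarrow> real \<Rightarrow> event list \<Rightarrow> nat set
                          \<Rightarrow> vtx set \<Rightarrow> ereal" where
  "cut_value n h \<alpha> \<alpha>' c es T U =
     (\<Sum>(u, v) \<in> {(u, v). u \<in> vertices n h es \<and> v \<in> vertices n h es \<and> u \<in> U \<and> v \<notin> U}.
        cap n h \<alpha> \<alpha>' c es T u v)"

definition min_cut :: "nat \<Rightarrow> nat \<Rightarrow> real \<Rightarrow> real \<Rightarrow> real \<Rightarrow> event list \<Rightarrow> nat set \<Rightarrow> ereal" where
  "min_cut n h \<alpha> \<alpha>' c es T =
     Inf (cut_value n h \<alpha> \<alpha>' c es T ` {U. U \<subseteq> vertices n h es \<and> Src \<in> U \<and> DC \<notin> U})"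

definition feasible :: "nat \<Rightarrow> nat \<Rightarrow> nat \<Rightarrow> nat \<Rightarrow> real \<Rightarrow> real \<Rightarrow> real \<Rightarrow> real \<Rightarrow> bool" where
  "feasible n k d h \<alpha> \<alpha>' c M \<longleftrightarrow>
     (\<forall>es T. valid_history n d es \<and> T \<subseteq> act n es (length es) \<and> card T = k
        \<longrightarrow> ereal M \<le> min_cut n h \<alpha> \<alpha>' c es T)"

text \<open>Asymptotic throughput (capacity) of a packet erasure link with erasure probability p
  over which b packets are transmitted.\<close>
definition erasure_capacity :: "real \<Rightarrow> real \<Rightarrow> real" where
  "erasure_capacity p b = (1 - p) * b"

end

theory Submission
  imports Defs
begin

lemma act_sub: "act n es j \<subseteq> {..<n+j}"
  by (induction j) auto

lemma exists_init:
  fixes V :: "nat set"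
  assumes "finite V" "k \<le> card V"
  shows "\<exists>X\<subseteq>V. card X = k \<and> (\<forall>x\<in>X. \<forall>v\<in>V. v < x \<longrightarrow> v \<in> X)"
  using assms(2)
proof (induction k)
  case 0 then show ?case by auto
next
  case (Suc k)
  then obtain X where X: "X \<subseteq> V" "card X = k" "\<forall>x\<in>X. \<forall>v\<in>V. v < x \<longrightarrow> v \<in> X" by auto
  have fX: "finite X" using X(1) assms(1) finite_subset by blast
  have "card X < card V" using X Suc.prems by simp
  then have ne: "V - X \<noteq> {}" using X(1) by auto
  define y where "y = Min (V - X)"
  have y1: "y \<in> V - X" unfolding y_def by (rule Min_in) (use ne assms(1) in auto)
  have y2: "\<forall>v\<in>V - X. y \<le> v" unfolding y_def using assms(1) by auto
  note y = y1 y2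
  show ?case
  proof (intro exI[of _ "insert y X"] conjI)
    show "insert y X \<subseteq> V" using X y by auto
    show "card (insert y X) = Suc k" using X y fX by auto
    show "\<forall>x\<in>insert y X. \<forall>v\<in>V. v < x \<longrightarrow> v \<in> insert y X"
    proof (intro ballI impI)
      fix x v assume xi: "x \<in> insert y X" and "v \<in> V" "v < x"
      from xi show "v \<in> insert y X"
      proof
        assume "x = y" then show ?thesis using y \<open>v \<in> V\<close> \<open>v < x\<close> by (metis Diff_iff insertCI not_le)
      next
        assume "x \<in> X" then show ?thesis using X(3) \<open>v \<in> V\<close> \<open>v < x\<close> by blast
      qed
    qed
  qed
qed

lemma sum_ge_card:
  fixes f :: "'a \<Rightarrow> ereal"
  assumes "finite A" "S \<subseteq> A" "\<And>u. u \<in> S \<Longrightarrow> ereal c \<le> f u" "\<And>u. u \<in> A \<Longrightarrow> 0 \<le> f u"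
  shows "ereal (real (card S) * c) \<le> sum f A"
proof -
  have "ereal (real (card S) * c) = (\<Sum>u\<in>S. ereal c)" by simp
  also have "\<dots> \<le> sum f S" by (rule sum_mono) (use assms(3) in auto)
  also have "\<dots> \<le> sum f A" by (rule sum_mono2) (use assms in auto)
  finally show ?thesis .
qed

lemma cap_nonneg: "0 \<le> \<alpha> \<Longrightarrow> 0 \<le> \<alpha>' \<Longrightarrow> 0 \<le> c \<Longrightarrow> 0 \<le> cap n h \<alpha> \<alpha>' c es T u v"
  by (cases u; cases v) auto

lemma vtx_img_simps[simp]:
  "NOut h \<in> NOut ` A \<longleftrightarrow> h \<in> A" "NIn h \<in> NIn ` A \<longleftrightarrow> h \<in> A"
  "RIn h \<in> RIn ` A \<longleftrightarrow> h \<in> A" "ROut h \<in> ROut ` A \<longleftrightarrow> h \<in> A"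
  by auto

lemma ereal_le_trans': "ereal z \<le> y \<Longrightarrow> a \<le> z \<Longrightarrow> ereal a \<le> y"
  by (metis ereal_less_eq(3) order_trans)

lemma mono_helper: "(a::real) \<le> c * \<beta> \<Longrightarrow> c \<le> z \<Longrightarrow> 0 \<le> \<beta> \<Longrightarrow> a \<le> z * \<beta>"
  by (metis mult_right_mono order_trans)

lemma finite_vertices: "finite (vertices n h es)"
  by (simp add: vertices_def)

lemma cut_inf:
  assumes "u \<in> vertices n h es" "v \<in> vertices n h es" "u \<in> U" "v \<notin> U"
    "cap n h \<alpha> \<alpha>' c es T u v = \<infinity>"
  shows "cut_value n h \<alpha> \<alpha>' c es T U = \<infinity>"
proof -
  have fin: "finite {(u, v). u \<in> vertices n h es \<and> v \<in> vertices n h es \<and> u \<in> U \<and> v \<notin> U}"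
    by (rule finite_subset[of _ "vertices n h es \<times> vertices n h es"]) (auto simp: finite_vertices)
  show ?thesis unfolding cut_value_def sum_Pinfty using fin assms by force
qed

lemma cut_regroup:
  "cut_value n h \<alpha> \<alpha>' c es T U =
   (\<Sum>v\<in>vertices n h es - U. \<Sum>u\<in>vertices n h es \<inter> U. cap n h \<alpha> \<alpha>' c es T u v)"
proof -
  have eq: "{(u, v). u \<in> vertices n h es \<and> v \<in> vertices n h es \<and> u \<in> U \<and> v \<notin> U}
     = (vertices n h es \<inter> U) \<times> (vertices n h es - U)" by auto
  show ?thesis unfolding cut_value_def eq sum.cartesian_product[symmetric] by (rule sum.swap)
qed

lemma feasible_MSR:
  assumes k1: "1 \<le> k" and kd: "k \<le> d" and b0: "0 \<le> \<beta>" and a0: "0 \<le> \<alpha>"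
    and ab: "\<alpha> \<le> (real d - real k + 2) * \<beta>"
  shows "feasible n k d 1 \<alpha> \<beta> \<beta> (real k * \<alpha>)"
  unfolding feasible_def
proof (intro allI impI)
  fix es T assume H: "valid_history n d es \<and> T \<subseteq> act n es (length es) \<and> card T = k"
  define L where "L = length es"
  define VV where "VV = vertices n 1 es"
  let ?cap = "cap n 1 \<alpha> \<beta> \<beta> es T"
  have capnn: "\<And>u v. 0 \<le> ?cap u v" using cap_nonneg a0 b0 by blast
  have finVV: "finite VV" unfolding VV_def by (rule finite_vertices)
  have VVeq: "VV = {Src, DC} \<union> NIn ` {..<n+L} \<union> NOut ` {..<n+L} \<union> RIn ` {..<1} \<union> ROut ` {..<1}"
    unfolding VV_def L_def vertices_def by simp
  show "ereal (real k * \<alpha>) \<le> min_cut n 1 \<alpha> \<beta> \<beta> es T"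
    unfolding min_cut_def
  proof (rule Inf_greatest, clarify)
    fix U assume U: "U \<subseteq> vertices n 1 es" "Src \<in> U" "DC \<notin> U"
    show "ereal (real k * \<alpha>) \<le> cut_value n 1 \<alpha> \<beta> \<beta> es T U"
    proof (cases "\<exists>u\<in>VV. \<exists>v\<in>VV. u \<in> U \<and> v \<notin> U \<and> ?cap u v = \<infinity>")
      case True
      then obtain u v where "u\<in>VV" "v\<in>VV" "u \<in> U" "v \<notin> U" "?cap u v = \<infinity>" by blast
      then have "cut_value n 1 \<alpha> \<beta> \<beta> es T U = \<infinity>" using cut_inf unfolding VV_def by metis
      then show ?thesis by simp
    next
      case False
      note noinf = False
      have RIn: "RIn 0 \<in> U"
      proof (rule ccontr)
        assume "RIn 0 \<notin> U"
        then show False using noinf U(2) by (auto simp: VVeq)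
      qed
      have Tout: "NOut t \<notin> U \<and> t < n + L" if "t \<in> T" for t
      proof
        have "t \<in> act n es L" using H that L_def by auto
        then show tl: "t < n + L" using act_sub by blast
        show "NOut t \<notin> U"
        proof
          assume "NOut t \<in> U"
          then show False using noinf U(3) tl that by (auto simp: VVeq)
        qed
      qed
      define V' where "V' = {i. i < n + L \<and> NOut i \<notin> U}"
      have finV': "finite V'" unfolding V'_def by simp
      have "T \<subseteq> V'" using Tout unfolding V'_def by auto
      then have "k \<le> card V'" using H card_mono[OF finV'] by auto
      then obtain X where X: "X \<subseteq> V'" "card X = k" "\<forall>x\<in>X. \<forall>v\<in>V'. v < x \<longrightarrow> v \<in> X"
        using exists_init[OF finV'] by blast
      have finX: "finite X" using X(1) finV' finite_subset by blast
      have Xne: "X \<noteq> {}" using X(2) k1 by auto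
      define m where "m = Max X"
      have mX: "m \<in> X" unfolding m_def using finX Xne by simp
      have Xv: "x < n + L \<and> NOut x \<notin> U" if "x \<in> X" for x using X(1) that unfolding V'_def by auto
      have Srcin: "NIn x \<in> U" if "x \<in> X" "x < n" for x
      proof (rule ccontr)
        assume "NIn x \<notin> U"
        then show False using noinf U(2) that Xv[OF that(1)] by (auto simp: VVeq)
      qed
      have cx1: "card (X \<inter> {..<x}) \<le> k - 1" if "x \<in> X" for x
      proof -
        have "X \<inter> {..<x} \<subseteq> X - {x}" by auto
        then have "card (X \<inter> {..<x}) \<le> card (X - {x})" using finX by (intro card_mono) auto
        then show ?thesis using X(2) that finX by simp
      qed
      have cx2: "card (X \<inter> {..<x}) \<le> k - 2" if "x \<in> X" "x \<noteq> m" for x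
      proof -
        have "x \<le> m" unfolding m_def using finX that by simp
        then have "X \<inter> {..<x} \<subseteq> X - {x, m}" by auto
        then have "card (X \<inter> {..<x}) \<le> card (X - {x, m})" using finX by (intro card_mono) auto
        also have "\<dots> = k - 2" using X(2) that mX finX by (simp add: card_Diff_subset)
        finally show ?thesis .
      qed
      define inc where "inc v = (\<Sum>u\<in>VV \<inter> U. ?cap u v)" for v
      have incnn: "0 \<le> inc v" for v unfolding inc_def by (rule sum_nonneg) (use capnn in auto)
      have P1: "ereal \<alpha> \<le> inc (NOut x)" if "x \<in> X" "NIn x \<in> U" for x
      proof -
        have "ereal (real (card {NIn x}) * \<alpha>) \<le> inc (NOut x)" unfolding inc_def
          by (rule sum_ge_card) (use finVV that Xv[OF that(1)] capnn in \<open>auto simp: VVeq L_def\<close>)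
        then show ?thesis by simp
      qed
      have P3: "ereal \<beta> \<le> inc (ROut 0)" 
      proof -
        have "ereal (real (card {RIn 0}) * \<beta>) \<le> inc (ROut 0)" unfolding inc_def
          by (rule sum_ge_card) (use finVV RIn capnn in \<open>auto simp: VVeq\<close>)
        then show ?thesis by simp
      qed
      define r :: nat where "r = (if ROut 0 \<in> U then 1 else 0)"
      have P2: "ereal (real (d - card (X \<inter> {..<x}) + r) * \<beta>) \<le> inc (NIn x)"
        if xX: "x \<in> X" and xU: "NIn x \<notin> U" for x
      proof -
        have xn: "n \<le> x" using Srcin xX xU by force
        have xL: "x < n + L" using Xv xX by auto
        define j where "j = x - n"
        have jL: "j < length es" using xn xL unfolding j_def L_def by auto
        define Hs where "Hs = snd (es ! j)"
        have Hs: "Hs \<subseteq> act n es j - {fst (es ! j)}" "card Hs = d"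
          using H jL unfolding valid_history_def Hs_def by auto
        have finHs: "finite Hs" using Hs(2) kd k1 card.infinite by fastforce
        have Hlt: "h < x" if "h \<in> Hs" for h using Hs(1) act_sub that xn unfolding j_def by fastforce
        define G where "G = {h \<in> Hs. NOut h \<in> U}"
        have "Hs - G \<subseteq> X \<inter> {..<x}"
        proof
          fix h assume h: "h \<in> Hs - G"
          then have "h < x" "NOut h \<notin> U" using Hlt unfolding G_def by auto
          then have "h \<in> V'" using xL unfolding V'_def by auto
          then show "h \<in> X \<inter> {..<x}" using X(3) xX \<open>h < x\<close> by auto
        qed
        then have c1: "card (Hs - G) \<le> card (X \<inter> {..<x})" using finX by (intro card_mono) auto
        have GH: "G \<subseteq> Hs" unfolding G_def by auto
        have "card (Hs - G) = d - card G" using Hs(2) finHs GH by (simp add: card_Diff_subset finite_subset)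
        moreover have "card G \<le> d" using Hs(2) finHs GH card_mono by blast
        ultimately have cG: "d - card (X \<inter> {..<x}) \<le> card G" using c1 by linarith
        define S where "S = NOut ` G \<union> (if ROut 0 \<in> U then {ROut 0} else {})"
        have finG: "finite G" using finHs GH finite_subset by blast
        have cS: "card S = card G + r"
          unfolding S_def r_def using finG by (auto simp: card_image inj_on_def card_insert_if)
        have "ereal (real (card S) * \<beta>) \<le> inc (NIn x)" unfolding inc_def
        proof (rule sum_ge_card)
          show "finite (VV \<inter> U)" using finVV by simp
          show "S \<subseteq> VV \<inter> U" unfolding S_def G_def using xL by (auto simp: VVeq dest: Hlt)
          show "ereal \<beta> \<le> ?cap u (NIn x)" if "u \<in> S" for u
            using that xn xL unfolding S_def G_def Hs_def j_def L_def by (auto split: if_splits)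
        qed (use capnn in auto)
        moreover have "real (d - card (X \<inter> {..<x}) + r) * \<beta> \<le> real (card S) * \<beta>"
          using cS cG b0 by (intro mult_right_mono) auto
        ultimately show ?thesis by (rule ereal_le_trans')
      qed
      define tgt where "tgt x = (if NIn x \<in> U then NOut x else NIn x)" for x
      define extra where "extra = (if ROut 0 \<in> U then 0 else inc (ROut 0))"
      define b where "b x = inc (tgt x) + (if x = m then extra else 0)" for x
      have extrann: "0 \<le> extra" unfolding extra_def using incnn by simp
      have bge: "ereal \<alpha> \<le> b x" if xX: "x \<in> X" for x
      proof (cases "NIn x \<in> U")
        case True
        then have "ereal \<alpha> \<le> inc (tgt x)" using P1 xX unfolding tgt_def by simp
        then show ?thesis unfolding b_def using extrann by (simp add: add_increasing2)
      next
        case False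
        note P = P2[OF xX False]
        have cd: "card (X \<inter> {..<x}) \<le> d" using cx1[OF xX] kd by linarith
        show ?thesis
        proof (cases "x = m")
          case False
          have "card {x, m} \<le> card X" using xX mX finX by (intro card_mono) auto
          then have k2: "2 \<le> k" using False X(2) by simp
          have "real (card (X \<inter> {..<x})) \<le> real k - 2"
          proof -
            have "card (X \<inter> {..<x}) \<le> k - 2" using cx2[OF xX False] .
            then have "real (card (X \<inter> {..<x})) \<le> real (k - 2)" by (simp only: of_nat_le_iff)
            then show ?thesis using k2 by (simp add: of_nat_diff)
          qed
          then have "real d - real k + 2 \<le> real (d - card (X \<inter> {..<x}) + r)"
            using cd by (simp add: of_nat_diff)
          then have "\<alpha> \<le> real (d - card (X \<inter> {..<x}) + r) * \<beta>"
            by (rule mono_helper[OF ab _ b0])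
          then have "ereal \<alpha> \<le> inc (tgt x)" using P \<open>NIn x \<notin> U\<close> unfolding tgt_def
            by (auto intro: ereal_le_trans')
          then show ?thesis unfolding b_def using False by simp
        next
          case True
          have rk: "real d - real k + 1 \<le> real (d - card (X \<inter> {..<x}))"
            using cx1[OF xX] cd k1 kd by (simp add: of_nat_diff)
          show ?thesis
          proof (cases "ROut 0 \<in> U")
            case True
            then have "real d - real k + 2 \<le> real (d - card (X \<inter> {..<x}) + r)"
              using rk unfolding r_def by simp
            then have "\<alpha> \<le> real (d - card (X \<inter> {..<x}) + r) * \<beta>"
              by (rule mono_helper[OF ab _ b0])
            then have "ereal \<alpha> \<le> inc (tgt x)" using P \<open>NIn x \<notin> U\<close> unfolding tgt_def
              by (auto intro: ereal_le_trans')
            then show ?thesis unfolding b_def using extrann by (simp add: add_increasing2)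
          next
            case False
            then have r0: "r = 0" unfolding r_def by simp
            have "\<alpha> \<le> real (d - card (X \<inter> {..<x})) * \<beta> + \<beta>"
              using mono_helper[OF ab, of "real (d - card (X \<inter> {..<x})) + 1"] b0 rk
              by (simp add: distrib_right)
            then have "ereal \<alpha> \<le> ereal (real (d - card (X \<inter> {..<x})) * \<beta>) + ereal \<beta>" by simp
            also have "\<dots> \<le> inc (tgt x) + extra"
              using P r0 P3 False \<open>NIn x \<notin> U\<close> unfolding tgt_def extra_def by (intro add_mono) auto
            finally show ?thesis unfolding b_def using \<open>x = m\<close> by simp
          qed
        qed
      qed
      have "ereal (real k * \<alpha>) = (\<Sum>x\<in>X. ereal \<alpha>)" using X(2) by simp
      also have "\<dots> \<le> (\<Sum>x\<in>X. b x)" using bge by (rule sum_mono)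
      also have "\<dots> = (\<Sum>x\<in>X. inc (tgt x)) + extra"
        unfolding b_def sum.distrib using mX finX by simp
      also have "\<dots> = (\<Sum>v\<in>tgt ` X \<union> (if ROut 0 \<in> U then {} else {ROut 0}). inc v)"
      proof -
        have inj: "inj_on tgt X" unfolding inj_on_def tgt_def by auto
        have "(\<Sum>v\<in>tgt ` X \<union> (if ROut 0 \<in> U then {} else {ROut 0}). inc v)
           = (\<Sum>v\<in>tgt ` X. inc v) + (\<Sum>v\<in>(if ROut 0 \<in> U then {} else {ROut 0}). inc v)"
          using finX by (intro sum.union_disjoint) (auto simp: tgt_def)
        also have "\<dots> = (\<Sum>x\<in>X. inc (tgt x)) + extra"
        proof -
          have rr: "(\<Sum>v\<in>tgt ` X. inc v) = (\<Sum>x\<in>X. inc (tgt x))"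
            using sum.reindex[OF inj, of inc] by (simp add: o_def)
          show ?thesis unfolding extra_def rr by simp
        qed
        finally show ?thesis by simp
      qed
      also have "\<dots> \<le> (\<Sum>v\<in>VV - U. inc v)"
      proof (rule sum_mono2)
        show "finite (VV - U)" using finVV by simp
        show "tgt ` X \<union> (if ROut 0 \<in> U then {} else {ROut 0}) \<subseteq> VV - U"
          using Xv unfolding tgt_def by (auto simp: VVeq)
      qed (use incnn in auto)
      also have "\<dots> = cut_value n 1 \<alpha> \<beta> \<beta> es T U"
        unfolding cut_regroup inc_def VV_def ..
      finally show ?thesis .
    qed
  qed
qed

lemma infeasible_bound:
  assumes k1: "1 \<le> k" and kd: "k \<le> d" and dn: "d < n" and b0: "0 \<le> \<beta>" and a0: "0 \<le> \<alpha>"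
    and F: "feasible n k d 1 \<alpha> \<beta> \<beta> (real k * \<alpha>)"
  shows "\<alpha> \<le> (real d - real k + 2) * \<beta>"
proof -
  define es where "es = [(n - 1, {..<d})]"
  define T where "T = {..<k-1} \<union> {n}"
  let ?cap = "cap n 1 \<alpha> \<beta> \<beta> es T"
  have act1: "act n es (length es) = ({..<n} - {n-1}) \<union> {n}" by (simp add: es_def)
  have valid: "valid_history n d es" unfolding valid_history_def es_def using dn by (simp add: subset_eq) (intro ballI; simp)
  have Tsub: "T \<subseteq> act n es (length es)" unfolding act1 T_def using kd dn by auto
  have cardT: "card T = k" unfolding T_def using k1 kd dn by simp
  have mc: "ereal (real k * \<alpha>) \<le> min_cut n 1 \<alpha> \<beta> \<beta> es T"
    using F valid Tsub cardT unfolding feasible_def by blast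
  define VV where "VV = vertices n 1 es"
  have VVeq: "VV = {Src, DC} \<union> NIn ` {..<n+1} \<union> NOut ` {..<n+1} \<union> RIn ` {..<1} \<union> ROut ` {..<1}"
    unfolding VV_def vertices_def es_def by simp
  define U0 where "U0 = VV - ({DC, NIn n, NOut n} \<union> NOut ` {..<k-1})"
  have "min_cut n 1 \<alpha> \<beta> \<beta> es T \<le> cut_value n 1 \<alpha> \<beta> \<beta> es T U0"
    unfolding min_cut_def by (rule Inf_lower) (auto simp: U0_def VV_def vertices_def)
  define C where "C = {(u, v). u \<in> VV \<and> v \<in> VV \<and> u \<in> U0 \<and> v \<notin> U0}"
  define E1 where "E1 = (\<lambda>i. (NIn i, NOut i)) ` {..<k-1}"
  define E2 where "E2 = (\<lambda>h. (NOut h, NIn n)) ` {k-1..<d}"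
  have finC: "finite C" unfolding C_def
    by (rule finite_subset[of _ "VV \<times> VV"]) (auto simp: VV_def finite_vertices)
  have sub: "E1 \<union> E2 \<union> {(ROut 0, NIn n)} \<subseteq> C"
    unfolding C_def E1_def E2_def U0_def using kd dn by (auto simp: VVeq)
  have zero: "\<forall>e\<in>C - (E1 \<union> E2 \<union> {(ROut 0, NIn n)}). case_prod ?cap e = 0"
  proof
    fix e assume e: "e \<in> C - (E1 \<union> E2 \<union> {(ROut 0, NIn n)})"
    obtain u v where uv: "e = (u, v)" by fastforce
    have "u \<in> U0" "v \<in> VV" "v \<notin> U0" "u \<in> VV" using e uv unfolding C_def by auto
    then have v: "v = DC \<or> v = NIn n \<or> v = NOut n \<or> (\<exists>i<k-1. v = NOut i)"
      unfolding U0_def by auto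
    have ne: "(u, v) \<notin> E1 \<union> E2 \<union> {(ROut 0, NIn n)}" using e uv by auto
    show "case_prod ?cap e = 0" unfolding uv using v \<open>u \<in> U0\<close> \<open>u \<in> VV\<close> ne
      by (cases u) (auto simp: U0_def VVeq E1_def E2_def T_def es_def)
  qed
  have "cut_value n 1 \<alpha> \<beta> \<beta> es T U0 = (\<Sum>e\<in>C. case_prod ?cap e)"
    unfolding cut_value_def C_def VV_def ..
  also have "\<dots> = (\<Sum>e\<in>E1 \<union> E2 \<union> {(ROut 0, NIn n)}. case_prod ?cap e)"
    by (rule sum.mono_neutral_right[OF finC sub zero])
  also have "\<dots> = (\<Sum>e\<in>E1 \<union> E2. case_prod ?cap e) + ?cap (ROut 0) (NIn n)"
    by (subst sum.union_disjoint) (auto simp: E1_def E2_def)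
  also have "(\<Sum>e\<in>E1 \<union> E2. case_prod ?cap e) = (\<Sum>e\<in>E1. case_prod ?cap e) + (\<Sum>e\<in>E2. case_prod ?cap e)"
    by (rule sum.union_disjoint) (auto simp: E1_def E2_def)
  also have "(\<Sum>e\<in>E1. case_prod ?cap e) = (\<Sum>i<k-1. ereal \<alpha>)"
  proof -
    have "(\<Sum>e\<in>E1. case_prod ?cap e) = (\<Sum>i<k-1. ?cap (NIn i) (NOut i))"
      unfolding E1_def by (simp add: sum.reindex inj_on_def)
    also have "\<dots> = (\<Sum>i<k-1. ereal \<alpha>)"
      by (rule sum.cong) (use dn kd in \<open>auto simp: es_def\<close>)
    finally show ?thesis .
  qed
  also have "(\<Sum>e\<in>E2. case_prod ?cap e) = (\<Sum>h\<in>{k-1..<d}. ereal \<beta>)"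
    unfolding E2_def by (subst sum.reindex) (auto simp: inj_on_def es_def)
  also have "?cap (ROut 0) (NIn n) = ereal \<beta>" by (simp add: es_def)
  finally have cv: "cut_value n 1 \<alpha> \<beta> \<beta> es T U0 \<le>
      ereal (real (k - 1) * \<alpha> + real (d - (k - 1)) * \<beta> + \<beta>)" by simp
  have "ereal (real k * \<alpha>) \<le> ereal (real (k - 1) * \<alpha> + real (d - (k - 1)) * \<beta> + \<beta>)"
    using mc \<open>min_cut n 1 \<alpha> \<beta> \<beta> es T \<le> _\<close> cv by (meson order_trans)
  then have "real k * \<alpha> \<le> (real k - 1) * \<alpha> + (1 + real d - real k) * \<beta> + \<beta>"
    using k1 kd by (simp add: of_nat_diff)
  then show ?thesis by (simp add: algebra_simps)
qed

lemma aux_div: "(k::real) \<noteq> 0 \<Longrightarrow> a \<noteq> 0 \<Longrightarrow> M / k = a * (M / (k * a))"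
  by (simp add: field_simps)

theorem corollary2:
  fixes n k d :: nat and M p :: real
  assumes "1 \<le> k" and "k \<le> d" and "d < n" and "M > 0" and "0 \<le> p" and "p < 1"
  shows "(let S = {real (d + 1) * (\<beta> / (1 - p)) | \<beta>. \<beta> \<ge> 0 \<and>
                 feasible n k d 1 (M / k) \<beta> (erasure_capacity p (\<beta> / (1 - p))) M};
              \<gamma> = M * (d + 1) / (k * (d - k + 2) * (1 - p))
          in \<gamma> \<in> S \<and> (\<forall>x\<in>S. \<gamma> \<le> x))"
proof -
  note k1 = assms(1) and kd = assms(2) and dn = assms(3) and M0 = assms(4)
  define \<beta>0 where "\<beta>0 = M / (real k * (real d - real k + 2))"
  have kpos: "real k > 0" using k1 by simp
  have hpos: "real d - real k + 2 > 0" using kd by simp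
  have pp: "1 - p > 0" using assms(6) by simp
  have b0pos: "\<beta>0 > 0" unfolding \<beta>0_def using kpos hpos M0 by simp
  have alpha_eq: "M / real k = (real d - real k + 2) * \<beta>0"
  proof -
    have hne: "real d - real k + 2 \<noteq> 0" using hpos by simp
    have kne: "real k \<noteq> 0" using kpos by simp
    show ?thesis unfolding \<beta>0_def using aux_div[OF kne hne] by simp
  qed
  have ec: "erasure_capacity p (b / (1 - p)) = b" for b
    unfolding erasure_capacity_def using pp by simp
  have Mk: "M = real k * (M / real k)" using kpos by simp
  have aM0: "0 \<le> M / real k" using kpos M0 by simp
  have rdk: "real (d - k + 2) = real d - real k + 2" using kd by (simp add: of_nat_diff)
  have rkd: "real (k * (d - k + 2)) = real k * (real d - real k + 2)" by (simp only: of_nat_mult rdk)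
  have gam: "M * real (d + 1) / (real (k * (d - k + 2)) * (1 - p)) = real (d + 1) * (\<beta>0 / (1 - p))"
    unfolding \<beta>0_def rkd by (simp add: field_simps)
  have feasb0: "feasible n k d 1 (M / k) \<beta>0 \<beta>0 M"
    using feasible_MSR[OF k1 kd _ aM0, of \<beta>0] b0pos alpha_eq Mk by simp
  show ?thesis unfolding Let_def ec
  proof (intro conjI ballI)
    show "M * real (d + 1) / (real (k * (d - k + 2)) * (1 - p))
      \<in> {real (d + 1) * (\<beta> / (1 - p)) |\<beta>. 0 \<le> \<beta> \<and> feasible n k d 1 (M / real k) \<beta> \<beta> M}"
      unfolding gam using feasb0 b0pos by auto
  next
    fix x assume "x \<in> {real (d + 1) * (\<beta> / (1 - p)) |\<beta>. 0 \<le> \<beta> \<and> feasible n k d 1 (M / real k) \<beta> \<beta> M}"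
    then obtain b where x: "x = real (d + 1) * (b / (1 - p))" and b: "0 \<le> b" "feasible n k d 1 (M / real k) b b M"
      by blast
    have "M / real k \<le> (real d - real k + 2) * b"
      using infeasible_bound[OF k1 kd dn b(1) aM0] b(2) Mk by simp
    then have "\<beta>0 \<le> b" using alpha_eq hpos by simp
    then have "\<beta>0 / (1 - p) \<le> b / (1 - p)" using pp by (simp add: divide_right_mono)
    then show "M * real (d + 1) / (real (k * (d - k + 2)) * (1 - p)) \<le> x"
      unfolding gam x by (rule mult_left_mono) simp_all
  qed
qed

end
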